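(* For every $y\in\mathcal S\times[-1,1]\times\mathcal S$ and all $p,q\in\Delta_d^{\mathcal S}$, \[ \ell^\Theta_{\mathrm C,\infty}\bigl(H(p,y),H(q,y)\bigr)\le\ell^\Theta_{\mathrm C,\infty}(p,q). \]
   Context: $\mathcal S=\{1,\dots,m\}$ finite. $\Theta=\{\theta_1<\dots<\theta_d\}$ with constant stride $\Delta>0$; $\Delta_d$ the probability simplex of $\mathbb R^d$; $\Delta_d^{\mathcal S}$ the set of families $(p_i)_{i\in\mathcal S}$, $p_i\in\Delta_d$. For $u\in\Delta_d$, $\eta^{u,0}:=\sum_ku_k\delta_{\theta_k}$. Categorical projection $\Pi^\Theta_{\mathrm C}$: $\delta_x\mapsto\delta_{\theta_1}$ if $x\le\theta_1$, $\delta_{\theta_d}$ if $x\ge\theta_d$, $\frac{\theta_{k+1}-x}{\Delta}\delta_{\theta_k}+\frac{x-\theta_k}{\Delta}\delta_{\theta_{k+1}}$ if $\theta_k\le x\le\theta_{k+1}$, extended linearly to probability laws. For $b\in\mathbb R$, $L_bu\in\Delta_d$ is defined by $\Pi^\Theta_{\mathrm C}(\text{law of }X+b,\ X\sim\eta^{u,0})=\eta^{L_bu,0}$. One-sample backup: for $y=(s,b,s')$, $H(p,y)=q$ with $q_u=p_u$ for $u\ne s$ and $q_s=L_bp_{s'}$. Coordinate Cramér metric: $F_u(\theta_k):=\sum_{j\le k}u_j$, $\ell^\Theta_{\mathrm C}(u,v)^2:=\Delta\sum_{k=1}^{d-1}(F_u(\theta_k)-F_v(\theta_k))^2$, $\ell^\Theta_{\mathrm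 C,\infty}(p,q):=\max_i\ell^\Theta_{\mathrm C}(p_i,q_i)$. *)

theory Defs
  imports "HOL-Analysis.Analysis"
begin

definition theta :: "real \<Rightarrow> real \<Rightarrow> nat \<Rightarrow> real" where
  "theta th1 Dl k = th1 + (real k - 1) * Dl"

definition prob_simplex :: "nat \<Rightarrow> (nat \<Rightarrow> real) set" where
  "prob_simplex d = {u. (\<forall>k\<in>{1..d}. 0 \<le> u k) \<and> (\<Sum>k=1..d. u k) = 1}"

definition fam_simplex :: "nat \<Rightarrow> nat \<Rightarrow> (nat \<Rightarrow> nat \<Rightarrow> real) set" where
  "fam_simplex m d = {p. \<forall>i\<in>{1..m}. p i \<in> prob_simplex d}"

text \<open>Categorical projection of a Dirac mass delta_x: coefficient on theta_j.\<close>
definition cat_proj_dirac :: "real \<Rightarrow> real \<Rightarrow> nat \<Rightarrow> real \<Rightarrow> nat \<Rightarrow> real" where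
  "cat_proj_dirac th1 Dl d x j =
     (if x \<le> theta th1 Dl 1 then (if j = 1 then 1 else 0)
      else if x \<ge> theta th1 Dl d then (if j = d then 1 else 0)
      else (let k = (SOME k. 1 \<le> k \<and> k < d \<and> theta th1 Dl k \<le> x \<and> x < theta th1 Dl (k+1)) in
            if j = k then (theta th1 Dl (k+1) - x) / Dl
            else if j = k + 1 then (x - theta th1 Dl k) / Dl
            else 0))"

text \<open>L_b u: coefficients of the categorical projection of the law of X + b, X ~ sum_k u_k delta_{theta_k}
  (projection extended linearly).\<close>
definition Lshift :: "real \<Rightarrow> real \<Rightarrow> nat \<Rightarrow> real \<Rightarrow> (nat \<Rightarrow> real) \<Rightarrow> nat \<Rightarrow> real" where
  "Lshift th1 Dl d b u = (\<lambda>j. \<Sum>k=1..d. u k * cat_proj_dirac th1 Dl d (theta th1 Dl k + b) j)"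

definition backup :: "real \<Rightarrow> real \<Rightarrow> nat \<Rightarrow> (nat \<Rightarrow> nat \<Rightarrow> real) \<Rightarrow> nat \<times> real \<times> nat
                      \<Rightarrow> nat \<Rightarrow> nat \<Rightarrow> real" where
  "backup th1 Dl d p y = (case y of (s, b, s') \<Rightarrow> p(s := Lshift th1 Dl d b (p s')))"

definition cdf :: "(nat \<Rightarrow> real) \<Rightarrow> nat \<Rightarrow> real" where
  "cdf u k = (\<Sum>j=1..k. u j)"

definition cramer :: "real \<Rightarrow> nat \<Rightarrow> (nat \<Rightarrow> real) \<Rightarrow> (nat \<Rightarrow> real) \<Rightarrow> real" where
  "cramer Dl d u v = sqrt (Dl * (\<Sum>k=1..d-1. (cdf u k - cdf v k)^2))"

definition cramer_inf :: "nat \<Rightarrow> real \<Rightarrow> nat \<Rightarrow> (nat \<Rightarrow> nat \<Rightarrow> real) \<Rightarrow> (nat \<Rightarrow> nat \<Rightarrow> real) \<Rightarrow> real" where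
  "cramer_inf m Dl d p q = Max ((\<lambda>i. cramer Dl d (p i) (q i)) ` {1..m})"

end

theory Submission
  imports Defs
begin

definition clamp :: "real \<Rightarrow> real" where "clamp t = min 1 (max 0 t)"
definition hat :: "real \<Rightarrow> real" where "hat t = clamp (t + 1) - clamp t"

lemma hat_eq: "hat t = max 0 (1 - \<bar>t\<bar>)"
  unfolding hat_def clamp_def by (auto simp: min_def max_def abs_if)

lemma hat_nonneg: "hat t \<ge> 0" by (simp add: hat_eq)
lemma hat_sym: "hat (- t) = hat t" by (simp add: hat_eq)

lemma hat_sum_int:
  fixes A :: "int set" assumes "finite A"
  shows "(\<Sum>j\<in>A. hat (of_int j - t)) \<le> 1"
proof -
  define f where "f = \<lfloor>t\<rfloor>"
  have f1: "of_int f \<le> t" "t < of_int f + 1" unfolding f_def by linarith+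
  define B where "B = {f, f+1}"
  have z: "hat (of_int j - t) = 0" if "j \<notin> B" for j
  proof -
    from that have "j \<le> f - 1 \<or> j \<ge> f + 2" unfolding B_def by auto
    then have "of_int j \<le> of_int f - (1::real) \<or> of_int j \<ge> of_int f + (2::real)" by fastforce
    then show ?thesis using f1 by (auto simp: hat_eq)
  qed
  have "(\<Sum>j\<in>A. hat (of_int j - t)) = (\<Sum>j\<in>A \<inter> B. hat (of_int j - t)) + (\<Sum>j\<in>A - B. hat (of_int j - t))"
    using assms by (metis sum.Int_Diff)
  also have "(\<Sum>j\<in>A - B. hat (of_int j - t)) = 0" using z by simp
  also have "(\<Sum>j\<in>A \<inter> B. hat (of_int j - t)) \<le> (\<Sum>j\<in>B. hat (of_int j - t))"
    by (rule sum_mono2) (auto simp: B_def hat_nonneg)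
  also have "(\<Sum>j\<in>B. hat (of_int j - t)) = hat (of_int f - t) + hat (of_int f + 1 - t)"
    by (simp add: B_def)
  also have "\<dots> = 1" using f1 by (simp add: hat_eq)
  finally show ?thesis by simp
qed

lemma hat_sum_nat:
  fixes A :: "nat set" assumes "finite A"
  shows "(\<Sum>k\<in>A. hat (real k - t)) \<le> 1"
proof -
  have "(\<Sum>k\<in>A. hat (real k - t)) = (\<Sum>j\<in>int ` A. hat (of_int j - t))"
    by (subst sum.reindex) (auto simp: inj_on_def)
  also have "\<dots> \<le> 1" using assms by (intro hat_sum_int) auto
  finally show ?thesis .
qed

lemma cs_weighted:
  fixes a e :: "nat \<Rightarrow> real" assumes "finite I" "\<And>i. i \<in> I \<Longrightarrow> a i \<ge> 0"
  shows "(\<Sum>i\<in>I. a i * e i)^2 \<le> (\<Sum>i\<in>I. a i) * (\<Sum>i\<in>I. a i * (e i)^2)"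
proof -
  have "(\<Sum>i\<in>I. a i * e i)^2 = (\<Sum>i\<in>I. \<Sum>j\<in>I. (a i * e i) * (a j * e j))"
    by (simp add: power2_eq_square sum_product)
  also have "\<dots> \<le> (\<Sum>i\<in>I. \<Sum>j\<in>I. a i * a j * ((e i)^2 + (e j)^2) / 2)"
  proof (intro sum_mono)
    fix i j assume "i \<in> I" "j \<in> I"
    have "0 \<le> a i * a j" using assms \<open>i \<in> I\<close> \<open>j \<in> I\<close> by simp
    moreover have "2 * (e i * e j) \<le> (e i)^2 + (e j)^2" proof -
      have "0 \<le> (e i - e j)^2" by simp
      then show ?thesis by (simp add: power2_diff)
    qed
    ultimately have "a i * a j * (2 * (e i * e j)) \<le> a i * a j * ((e i)^2 + (e j)^2)"
      by (rule mult_left_mono[rotated])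
    then show "(a i * e i) * (a j * e j) \<le> a i * a j * ((e i)^2 + (e j)^2) / 2" by (simp add: algebra_simps)
  qed
  also have "\<dots> = (\<Sum>i\<in>I. \<Sum>j\<in>I. (a j * (a i * (e i)^2) + a i * (a j * (e j)^2)) / 2)"
    by (intro sum.cong refl) (simp add: distrib_left mult.assoc mult.left_commute)
  also have "\<dots> = ((\<Sum>i\<in>I. \<Sum>j\<in>I. a j * (a i * (e i)^2)) + (\<Sum>i\<in>I. \<Sum>j\<in>I. a i * (a j * (e j)^2))) / 2"
    by (simp add: sum_divide_distrib sum.distrib add_divide_distrib)
  also have "(\<Sum>i\<in>I. \<Sum>j\<in>I. a i * (a j * (e j)^2)) = (\<Sum>i\<in>I. \<Sum>j\<in>I. a j * (a i * (e i)^2))"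
    by (rule sum.swap)
  also have "(\<Sum>i\<in>I. \<Sum>j\<in>I. a j * (a i * (e i)^2)) = (\<Sum>i\<in>I. a i) * (\<Sum>i\<in>I. a i * (e i)^2)"
  proof -
    have "(\<Sum>i\<in>I. \<Sum>j\<in>I. a j * (a i * (e i)^2)) = (\<Sum>i\<in>I. (a i * (e i)^2) * (\<Sum>j\<in>I. a j))"
    proof (intro sum.cong refl)
      fix i
      show "(\<Sum>j\<in>I. a j * (a i * (e i)^2)) = (a i * (e i)^2) * (\<Sum>j\<in>I. a j)"
        using sum_distrib_right[of a I "a i * (e i)^2", symmetric] by (simp only: mult.commute)
    qed
    also have "\<dots> = (\<Sum>i\<in>I. a i * (e i)^2) * (\<Sum>i\<in>I. a i)"
      by (rule sum_distrib_right[symmetric])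
    also have "\<dots> = (\<Sum>i\<in>I. a i) * (\<Sum>i\<in>I. a i * (e i)^2)"
      by (rule mult.commute)
    finally show ?thesis .
  qed
  finally show ?thesis by simp
qed

lemma schur:
  fixes a :: "nat \<Rightarrow> nat \<Rightarrow> real" and e :: "nat \<Rightarrow> real"
  assumes "finite I" "finite K" "\<And>k i. a k i \<ge> 0"
    and "\<And>k. k \<in> K \<Longrightarrow> (\<Sum>i\<in>I. a k i) \<le> 1"
    and "\<And>i. i \<in> I \<Longrightarrow> (\<Sum>k\<in>K. a k i) \<le> 1"
  shows "(\<Sum>k\<in>K. (\<Sum>i\<in>I. a k i * e i)^2) \<le> (\<Sum>i\<in>I. (e i)^2)"
proof -
  have "(\<Sum>k\<in>K. (\<Sum>i\<in>I. a k i * e i)^2) \<le> (\<Sum>k\<in>K. \<Sum>i\<in>I. a k i * (e i)^2)"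
  proof (rule sum_mono)
    fix k assume k: "k \<in> K"
    have nn: "0 \<le> (\<Sum>i\<in>I. a k i * (e i)^2)" using assms(3) by (simp add: sum_nonneg)
    have "(\<Sum>i\<in>I. a k i * e i)^2 \<le> (\<Sum>i\<in>I. a k i) * (\<Sum>i\<in>I. a k i * (e i)^2)"
      using cs_weighted[of I "a k" e] assms by simp
    also have "\<dots> \<le> 1 * (\<Sum>i\<in>I. a k i * (e i)^2)"
      by (rule mult_right_mono[OF assms(4)[OF k] nn])
    finally show "(\<Sum>i\<in>I. a k i * e i)^2 \<le> (\<Sum>i\<in>I. a k i * (e i)^2)" by simp
  qed
  also have "\<dots> = (\<Sum>i\<in>I. (e i)^2 * (\<Sum>k\<in>K. a k i))"
    by (subst sum.swap) (simp add: sum_distrib_right mult.commute)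
  also have "\<dots> \<le> (\<Sum>i\<in>I. (e i)^2 * 1)"
    by (intro sum_mono mult_left_mono assms(5)) auto
  finally show ?thesis by simp
qed

lemma sum_by_parts:
  fixes w g :: "nat \<Rightarrow> real"
  shows "(\<Sum>i=1..n. w i * g i) = (\<Sum>i=1..n. (\<Sum>j=1..i. w j) * (g i - g (i+1))) + (\<Sum>j=1..n. w j) * g (n+1)"
  by (induction n) (simp_all add: algebra_simps)

lemma theta_diff: "theta th1 Dl i - theta th1 Dl j = (real i - real j) * Dl"
  unfolding theta_def by (simp add: algebra_simps)

lemma proj_cdf:
  assumes Dl: "Dl > 0" and k: "1 \<le> k" "k < d"
  shows "(\<Sum>j=1..k. cat_proj_dirac th1 Dl d x j) = clamp ((theta th1 Dl (k+1) - x) / Dl)"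
proof (cases "x \<le> theta th1 Dl 1")
  case True
  have "(\<Sum>j=1..k. cat_proj_dirac th1 Dl d x j) = (\<Sum>j=1..k. if j = 1 then 1 else 0)"
    using True by (simp add: cat_proj_dirac_def)
  also have "\<dots> = 1" using k by simp
  finally have L: "(\<Sum>j=1..k. cat_proj_dirac th1 Dl d x j) = 1" .
  have "theta th1 Dl (k+1) - x \<ge> theta th1 Dl (k+1) - theta th1 Dl 1" using True by simp
  also have "theta th1 Dl (k+1) - theta th1 Dl 1 = real k * Dl" by (simp add: theta_diff)
  also have "real k * Dl \<ge> 1 * Dl" using k Dl by (intro mult_right_mono) auto
  finally have "(theta th1 Dl (k+1) - x) / Dl \<ge> 1" using Dl by (simp add: field_simps)
  then show ?thesis using L by (simp add: clamp_def)
next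
  case F1: False
  show ?thesis
  proof (cases "x \<ge> theta th1 Dl d")
    case True
    have "(\<Sum>j=1..k. cat_proj_dirac th1 Dl d x j) = (\<Sum>j=1..k. if j = d then 1 else 0)"
      using True F1 by (simp add: cat_proj_dirac_def)
    also have "\<dots> = 0" using k by simp
    finally have L: "(\<Sum>j=1..k. cat_proj_dirac th1 Dl d x j) = 0" .
    have "theta th1 Dl (k+1) - theta th1 Dl d = (real (k+1) - real d) * Dl" by (simp add: theta_diff)
    also have "\<dots> \<le> 0" using k Dl by (intro mult_nonpos_nonneg) auto
    finally have "(theta th1 Dl (k+1) - x) / Dl \<le> 0" using Dl True by (simp add: divide_nonpos_pos)
    then show ?thesis using L by (simp add: clamp_def)
  next
    case F2: False
    define P where "P = (\<lambda>k. 1 \<le> k \<and> k < d \<and> theta th1 Dl k \<le> x \<and> x < theta th1 Dl (k+1))"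
    define r where "r = (x - th1) / Dl"
    have r0: "r > 0" using F1 Dl unfolding r_def theta_def by simp
    define k1 where "k1 = nat \<lfloor>r\<rfloor> + 1"
    have fl: "real (nat \<lfloor>r\<rfloor>) = of_int \<lfloor>r\<rfloor>" using r0 by simp
    have tk1: "theta th1 Dl k1 = th1 + real_of_int \<lfloor>r\<rfloor> * Dl"
      unfolding k1_def theta_def using fl by simp
    have tk2: "theta th1 Dl (k1+1) = th1 + (real_of_int \<lfloor>r\<rfloor> + 1) * Dl"
      unfolding k1_def theta_def using fl by simp
    have xr: "x = th1 + r * Dl" unfolding r_def using Dl by simp
    have a1: "theta th1 Dl k1 \<le> x"
    proof -
      have "real_of_int \<lfloor>r\<rfloor> * Dl \<le> r * Dl" using Dl by (intro mult_right_mono) auto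
      then show ?thesis using tk1 xr by linarith
    qed
    have a2: "x < theta th1 Dl (k1+1)"
    proof -
      have "r * Dl < (real_of_int \<lfloor>r\<rfloor> + 1) * Dl" using Dl by (intro mult_strict_right_mono) auto
      then show ?thesis using tk2 xr by linarith
    qed
    have a3: "k1 < d"
    proof (rule ccontr)
      assume "\<not> k1 < d"
      then have "theta th1 Dl d \<le> theta th1 Dl k1" unfolding theta_def using Dl
        by (intro add_left_mono mult_right_mono) auto
      then show False using a1 F2 by simp
    qed
    have "P k1" unfolding P_def using a1 a2 a3 k1_def by simp
    then have Pk0: "P (SOME k. P k)" by (rule someI)
    define k0 where "k0 = (SOME k. P k)"
    have k0: "1 \<le> k0" "k0 < d" "theta th1 Dl k0 \<le> x" "x < theta th1 Dl (k0+1)"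
      using Pk0 unfolding P_def k0_def by auto
    define A where "A = (theta th1 Dl (k0+1) - x) / Dl"
    define B where "B = (x - theta th1 Dl k0) / Dl"
    have AB: "A + B = 1" unfolding A_def B_def using Dl
      by (simp add: add_divide_distrib[symmetric] theta_diff)
    have "(\<Sum>j=1..k. cat_proj_dirac th1 Dl d x j) =
          (\<Sum>j=1..k. (if j = k0 then A else 0) + (if j = k0 + 1 then B else 0))"
      using F1 F2 unfolding cat_proj_dirac_def Let_def P_def[symmetric] k0_def[symmetric] A_def B_def
      by (intro sum.cong refl) auto
    also have "\<dots> = (if k0 \<le> k then A else 0) + (if k0 + 1 \<le> k then B else 0)"
      using k0 by (simp add: sum.distrib)
    finally have L: "(\<Sum>j=1..k. cat_proj_dirac th1 Dl d x j) =
       (if k0 \<le> k then A else 0) + (if k0 + 1 \<le> k then B else 0)" .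
    have R: "(theta th1 Dl (k+1) - x) / Dl = A + (real k - real k0)"
      unfolding A_def using Dl by (simp add: field_simps theta_def)
    have tt: "theta th1 Dl (k0+1) = theta th1 Dl k0 + Dl" using theta_diff[of th1 Dl "k0+1" k0] by simp
    have A01: "0 < A" "A \<le> 1" using tt k0 Dl unfolding A_def by (auto simp: field_simps)
    consider "k < k0" | "k = k0" | "k0 + 1 \<le> k" by linarith
    then show ?thesis
    proof cases
      case 1
      then have "real k - real k0 \<le> -1" by simp
      then show ?thesis using L R A01 1 by (simp add: clamp_def)
    next
      case 2
      then show ?thesis using L R A01 by (simp add: clamp_def)
    next
      case 3
      then have "real k - real k0 \<ge> 1" by simp
      then show ?thesis using L R A01 AB 3 by (simp add: clamp_def)
    qed
  qed
qed


lemma Lshift_cdf: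
  assumes Dl: "Dl > 0" and k: "1 \<le> k" "k < d"
  shows "cdf (Lshift th1 Dl d b u) k = (\<Sum>i=1..d. u i * clamp (real k + 1 - real i - b / Dl))"
proof -
  have "cdf (Lshift th1 Dl d b u) k = (\<Sum>i=1..d. u i * (\<Sum>j=1..k. cat_proj_dirac th1 Dl d (theta th1 Dl i + b) j))"
    unfolding cdf_def Lshift_def by (subst sum.swap) (simp add: sum_distrib_left)
  also have "\<dots> = (\<Sum>i=1..d. u i * clamp (real k + 1 - real i - b / Dl))"
  proof (intro sum.cong refl)
    fix i
    have "(theta th1 Dl (k+1) - (theta th1 Dl i + b)) / Dl = real k + 1 - real i - b / Dl"
      using Dl by (simp add: theta_def field_simps)
    then show "u i * (\<Sum>j=1..k. cat_proj_dirac th1 Dl d (theta th1 Dl i + b) j) = u i * clamp (real k + 1 - real i - b / Dl)"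
      using proj_cdf[OF Dl k] by simp
  qed
  finally show ?thesis .
qed

lemma Lshift_cdf_diff:
  assumes Dl: "Dl > 0" and k: "1 \<le> k" "k < d"
    and u: "u \<in> prob_simplex d" and v: "v \<in> prob_simplex d"
  shows "cdf (Lshift th1 Dl d b u) k - cdf (Lshift th1 Dl d b v) k
       = (\<Sum>i=1..d-1. (cdf u i - cdf v i) * hat (real k - real i - b / Dl))"
proof -
  define g where "g i = clamp (real k + 1 - real i - b / Dl)" for i
  define w where "w i = u i - v i" for i
  have "cdf (Lshift th1 Dl d b u) k - cdf (Lshift th1 Dl d b v) k = (\<Sum>i=1..d. w i * g i)"
    unfolding Lshift_cdf[OF assms(1-3)] w_def g_def by (simp add: sum_subtractf[symmetric] algebra_simps)
  also have "\<dots> = (\<Sum>i=1..d. (\<Sum>j=1..i. w j) * (g i - g (i+1))) + (\<Sum>j=1..d. w j) * g (d+1)"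
    by (rule sum_by_parts)
  also have "(\<Sum>j=1..d. w j) = 0" using u v unfolding w_def prob_simplex_def by (simp add: sum_subtractf)
  also have "{1..d} = insert d {1..d-1}" using k by auto
  also have "(\<Sum>i\<in>insert d {1..d-1}. (\<Sum>j=1..i. w j) * (g i - g (i+1)))
      = (\<Sum>j=1..d. w j) * (g d - g (d+1)) + (\<Sum>i=1..d-1. (\<Sum>j=1..i. w j) * (g i - g (i+1)))"
    using k by (subst sum.insert) auto
  also have "(\<Sum>j=1..d. w j) = 0" using u v unfolding w_def prob_simplex_def by (simp add: sum_subtractf)
  also have "(\<Sum>i=1..d-1. (\<Sum>j=1..i. w j) * (g i - g (i+1))) = (\<Sum>i=1..d-1. (cdf u i - cdf v i) * hat (real k - real i - b / Dl))"
  proof (intro sum.cong refl)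
    fix i
    have "g i - g (i+1) = hat (real k - real i - b / Dl)"
      unfolding g_def hat_def by (simp add: algebra_simps)
    then show "(\<Sum>j=1..i. w j) * (g i - g (i+1)) = (cdf u i - cdf v i) * hat (real k - real i - b / Dl)"
      unfolding w_def cdf_def by (simp add: sum_subtractf)
  qed
  finally show ?thesis by simp
qed

lemma cramer_Lshift:
  assumes Dl: "Dl > 0" and u: "u \<in> prob_simplex d" and v: "v \<in> prob_simplex d"
  shows "cramer Dl d (Lshift th1 Dl d b u) (Lshift th1 Dl d b v) \<le> cramer Dl d u v"
proof -
  define a where "a k i = hat (real k - real i - b / Dl)" for k i :: nat
  define e where "e i = cdf u i - cdf v i" for i
  have "(\<Sum>k=1..d-1. (cdf (Lshift th1 Dl d b u) k - cdf (Lshift th1 Dl d b v) k)^2)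
      = (\<Sum>k=1..d-1. (\<Sum>i=1..d-1. a k i * e i)^2)"
  proof (intro sum.cong refl)
    fix k assume "k \<in> {1..d-1}"
    then have "1 \<le> k" "k < d" by auto
    then show "(cdf (Lshift th1 Dl d b u) k - cdf (Lshift th1 Dl d b v) k)^2 = (\<Sum>i=1..d-1. a k i * e i)^2"
    proof -
      have "cdf (Lshift th1 Dl d b u) k - cdf (Lshift th1 Dl d b v) k
         = (\<Sum>i=1..d-1. (cdf u i - cdf v i) * hat (real k - real i - b / Dl))"
        by (rule Lshift_cdf_diff[OF Dl \<open>1 \<le> k\<close> \<open>k < d\<close> u v])
      also have "\<dots> = (\<Sum>i=1..d-1. a k i * e i)"
        unfolding a_def e_def by (intro sum.cong refl) (rule mult.commute)
      finally show ?thesis by (rule arg_cong)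
    qed
  qed
  also have "\<dots> \<le> (\<Sum>i=1..d-1. (e i)^2)"
  proof (rule schur)
    show "a k i \<ge> 0" for k i unfolding a_def by (rule hat_nonneg)
    show "(\<Sum>i=1..d-1. a k i) \<le> 1" for k
    proof -
      have "(\<Sum>i=1..d-1. a k i) = (\<Sum>i=1..d-1. hat (real i - (real k - b / Dl)))"
      proof (intro sum.cong refl)
        fix i
        have "real k - real i - b / Dl = - (real i - (real k - b / Dl))" by simp
        then show "a k i = hat (real i - (real k - b / Dl))" unfolding a_def by (simp only: hat_sym)
      qed
      also have "\<dots> \<le> 1" by (rule hat_sum_nat) simp
      finally show ?thesis .
    qed
    show "(\<Sum>k=1..d-1. a k i) \<le> 1" for i
    proof -
      have "(\<Sum>k=1..d-1. a k i) = (\<Sum>k=1..d-1. hat (real k - (real i + b / Dl)))"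
      proof (intro sum.cong refl)
        fix k
        have "real k - real i - b / Dl = real k - (real i + b / Dl)" by simp
        then show "a k i = hat (real k - (real i + b / Dl))" unfolding a_def by (simp only:)
      qed
      also have "\<dots> \<le> 1" by (rule hat_sum_nat) simp
      finally show ?thesis .
    qed
  qed simp_all
  finally have S: "(\<Sum>k=1..d-1. (cdf (Lshift th1 Dl d b u) k - cdf (Lshift th1 Dl d b v) k)^2)
      \<le> (\<Sum>k=1..d-1. (cdf u k - cdf v k)^2)" unfolding e_def .
  show ?thesis unfolding cramer_def
    by (intro real_sqrt_le_mono mult_left_mono S) (use Dl in auto)
qed

theorem lemma2:
  fixes m d :: nat and th1 Dl :: real and p q :: "nat \<Rightarrow> nat \<Rightarrow> real"
    and s s' :: nat and b :: real
  assumes "m \<ge> 1" and "d \<ge> 1" and "Dl > 0"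
    and "s \<in> {1..m}" and "s' \<in> {1..m}" and "b \<in> {-1..1}"
    and "p \<in> fam_simplex m d" and "q \<in> fam_simplex m d"
  shows "cramer_inf m Dl d (backup th1 Dl d p (s, b, s')) (backup th1 Dl d q (s, b, s'))
           \<le> cramer_inf m Dl d p q"
proof -
  define G where "G i = cramer Dl d (p i) (q i)" for i
  have fin: "finite (G ` {1..m})" and ne: "G ` {1..m} \<noteq> {}" using assms(1) by auto
  have ps: "p s' \<in> prob_simplex d" "q s' \<in> prob_simplex d"
    using assms(5,7,8) unfolding fam_simplex_def by auto
  show ?thesis unfolding cramer_inf_def G_def[symmetric]
  proof (rule Max.boundedI)
    show "finite ((\<lambda>i. cramer Dl d (backup th1 Dl d p (s, b, s') i) (backup th1 Dl d q (s, b, s') i)) ` {1..m})" by simp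
    show "(\<lambda>i. cramer Dl d (backup th1 Dl d p (s, b, s') i) (backup th1 Dl d q (s, b, s') i)) ` {1..m} \<noteq> {}"
      using assms(1) by auto
    fix x assume "x \<in> (\<lambda>i. cramer Dl d (backup th1 Dl d p (s, b, s') i) (backup th1 Dl d q (s, b, s') i)) ` {1..m}"
    then obtain i where i: "i \<in> {1..m}" and x: "x = cramer Dl d (backup th1 Dl d p (s, b, s') i) (backup th1 Dl d q (s, b, s') i)"
      by auto
    show "x \<le> Max (G ` {1..m})"
    proof (cases "i = s")
      case True
      then have "x = cramer Dl d (Lshift th1 Dl d b (p s')) (Lshift th1 Dl d b (q s'))"
        using x by (simp add: backup_def)
      also have "\<dots> \<le> G s'" unfolding G_def by (rule cramer_Lshift[OF assms(3) ps])
      also have "\<dots> \<le> Max (G ` {1..m})" using fin assms(5) by (intro Max_ge) auto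
      finally show ?thesis .
    next
      case False
      then have "x = G i" using x by (simp add: backup_def G_def)
      also have "\<dots> \<le> Max (G ` {1..m})" using fin i by (intro Max_ge) auto
      finally show ?thesis .
    qed
  qed
qed

end
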